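(* Let $(\Omega,\mathcal F)$ be a measurable space with $\Sigma\neq\emptyset$, $\nu$ a finite measure, and $\mu$ a finite measure with $\mu\ll\nu$. Let $F_\mu(y)=\nu(\{\omega:\frac{d\mu}{d\nu}(\omega)\le y\})$, $F_\mu(+\infty)=\lim_{y\to\infty}F_\mu(y)$, $F_\mu^{-1}(\beta)=\inf\{z\ge0:F_\mu(z)>\beta\}$, and let $m$ be the (probability) measure on $(0,1]$ determined by $$m((0,\gamma])=\frac1{\mu(\Omega)}\int_{\{y\ge0:\ F_\mu(y)\ge(1-\gamma)\nu(\Omega)\}}(F_\mu(+\infty)-F_\mu(y))\,dy,\quad\gamma\in(0,1].$$ Then for all $\gamma\in[0,1)$, $$\int_{[1-\gamma,1]}\frac{m(d\alpha)}{\alpha}=\frac{\nu(\Omega)}{\mu(\Omega)}F_\mu^{-1}(\nu(\Omega)\gamma).$$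
   Context: $\Sigma$ denotes the set of all classes $\mathcal I\subset\mathcal F$ that are chains (totally ordered by inclusion), contain $\emptyset$ and $\Omega$, and generate $\mathcal F$ as a $\sigma$-algebra. $\frac{d\mu}{d\nu}$ is the non-negative Radon–Nikodym derivative. *)

theory Defs
  imports "HOL-Probability.Probability"
begin

definition Sigma_chains :: "'a measure \<Rightarrow> 'a set set set" where
  "Sigma_chains M = {I. I \<subseteq> sets M \<and> (\<forall>A\<in>I. \<forall>B\<in>I. A \<subseteq> B \<or> B \<subseteq> A)
      \<and> {} \<in> I \<and> space M \<in> I \<and> sigma_sets (space M) I = sets M}"

text \<open>F_mu(y) = nu({omega : dmu/dnu(omega) <= y}); for y < 0 this set is empty since
  the density is nonnegative.\<close>
definition Fmu :: "'a measure \<Rightarrow> 'a measure \<Rightarrow> real \<Rightarrow> real" where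
  "Fmu \<nu> \<mu> y = (if y < 0 then 0
      else measure \<nu> {\<omega> \<in> space \<nu>. RN_deriv \<nu> \<mu> \<omega> \<le> ennreal y})"

definition Fmu_inf :: "'a measure \<Rightarrow> 'a measure \<Rightarrow> real" where
  "Fmu_inf \<nu> \<mu> = Lim at_top (Fmu \<nu> \<mu>)"

definition Fmu_inv :: "'a measure \<Rightarrow> 'a measure \<Rightarrow> real \<Rightarrow> real" where
  "Fmu_inv \<nu> \<mu> \<beta> = Inf {z. z \<ge> 0 \<and> Fmu \<nu> \<mu> z > \<beta>}"

end

theory Submission
  imports Defs
begin

theorem lemma18:
  fixes \<nu> \<mu> :: "'a measure" and m :: "real measure"
  assumes "Sigma_chains \<nu> \<noteq> {}"
    and "finite_measure \<nu>" and "finite_measure \<mu>"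
    and "sets \<mu> = sets \<nu>"
    and "absolutely_continuous \<nu> \<mu>"
    and "sets m = sets (restrict_space borel {0<..1})"
    and "prob_space m"
    and "\<And>\<gamma>. \<gamma> \<in> {0<..1} \<Longrightarrow> emeasure m {0<..\<gamma>} =
           ennreal (1 / measure \<mu> (space \<mu>)) *
           (\<integral>\<^sup>+ y \<in> {y. y \<ge> 0 \<and> Fmu \<nu> \<mu> y \<ge> (1 - \<gamma>) * measure \<nu> (space \<nu>)}.
              ennreal (Fmu_inf \<nu> \<mu> - Fmu \<nu> \<mu> y) \<partial>lborel)"
    and "0 \<le> \<gamma>" "\<gamma> < 1"
  shows "(\<integral>\<^sup>+ \<alpha> \<in> {1 - \<gamma>..1}. ennreal (1 / \<alpha>) \<partial>m) =
         ennreal (measure \<nu> (space \<nu>) / measure \<mu> (space \<mu>) *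
                  Fmu_inv \<nu> \<mu> (measure \<nu> (space \<nu>) * \<gamma>))"
proof -
  interpret fnu: finite_measure \<nu> by fact
  interpret fmu: finite_measure \<mu> by fact
  interpret pm: prob_space m by fact
  define N where "N = measure \<nu> (space \<nu>)"
  define Mu where "Mu = measure \<mu> (space \<mu>)"
  define f where "f = RN_deriv \<nu> \<mu>"
  define F where "F = Fmu \<nu> \<mu>"
  define L where "L = Fmu_inf \<nu> \<mu>"
  have fmeas[measurable]: "f \<in> borel_measurable \<nu>" unfolding f_def by simp
  have dens: "density \<nu> f = \<mu>" unfolding f_def
    using fnu.density_RN_deriv assms(4,5) by blast
  have spm: "space m = {0<..1}"
    using sets_eq_imp_space_eq[OF assms(6)] by simp
  have spmu: "space \<mu> = space \<nu>" using sets_eq_imp_space_eq[OF assms(4)] .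
  have intf: "(\<integral>\<^sup>+ x. f x \<partial>\<nu>) = ennreal Mu"
  proof -
    have "(\<integral>\<^sup>+ x. f x \<partial>\<nu>) = (\<integral>\<^sup>+ x. f x * indicator (space \<nu>) x \<partial>\<nu>)"
      by (rule nn_integral_cong) simp
    also have "\<dots> = emeasure (density \<nu> f) (space \<nu>)"
      by (rule emeasure_density[symmetric]) auto
    also have "\<dots> = emeasure \<mu> (space \<mu>)" using dens spmu by simp
    also have "\<dots> = ennreal Mu" unfolding Mu_def by (simp add: fmu.emeasure_eq_measure)
    finally show ?thesis .
  qed
  have Mu_pos: "Mu > 0"
  proof (rule ccontr)
    assume "\<not> Mu > 0"
    then have "Mu = 0" unfolding Mu_def using measure_nonneg by (metis order_less_le)
    then have "emeasure m {0<..1} = 0" using assms(8)[of 1] unfolding Mu_def by simp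
    then show False using pm.emeasure_space_1 spm by simp
  qed
  have N_pos: "N > 0"
  proof (rule ccontr)
    assume "\<not> N > 0"
    then have "N = 0" unfolding N_def using measure_nonneg by (metis order_less_le)
    then have "space \<nu> \<in> null_sets \<nu>" unfolding N_def
      by (simp add: fnu.emeasure_eq_measure null_sets_def)
    then have "space \<mu> \<in> null_sets \<mu>" using assms(5) spmu unfolding absolutely_continuous_def by auto
    then have "Mu = 0" unfolding Mu_def by (simp add: fmu.emeasure_eq_measure null_sets_def)
    then show False using Mu_pos by simp
  qed
  have Fdef: "F y = (if y < 0 then 0 else measure \<nu> {\<omega> \<in> space \<nu>. f \<omega> \<le> ennreal y})" for y
    unfolding F_def f_def Fmu_def by simp
  have Fcompl: "F y = N - measure \<nu> {\<omega> \<in> space \<nu>. ennreal y < f \<omega>}" if "y \<ge> 0" for y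
  proof -
    have "{\<omega> \<in> space \<nu>. f \<omega> \<le> ennreal y} = space \<nu> - {\<omega> \<in> space \<nu>. ennreal y < f \<omega>}"
      by (auto simp: not_less)
    then show ?thesis using that unfolding Fdef N_def
      by (simp add: fnu.finite_measure_Diff)
  qed
  have F_nonneg: "F y \<ge> 0" for y unfolding Fdef by simp
  have F_le: "F y \<le> N" for y
  proof (cases "y < 0")
    case True then show ?thesis using N_pos by (simp add: Fdef)
  next
    case False then show ?thesis unfolding Fdef N_def by (simp add: fnu.bounded_measure)
  qed
  have F_mono: "F x \<le> F y" if "x \<le> y" for x y
  proof (cases "x < 0")
    case True then show ?thesis using F_nonneg[of y] by (simp add: Fdef)
  next
    case False
    have sub: "{\<omega> \<in> space \<nu>. f \<omega> \<le> ennreal x} \<subseteq> {\<omega> \<in> space \<nu>. f \<omega> \<le> ennreal y}"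
      using that by (auto intro: order_trans ennreal_leI)
    have "measure \<nu> {\<omega> \<in> space \<nu>. f \<omega> \<le> ennreal x} \<le> measure \<nu> {\<omega> \<in> space \<nu>. f \<omega> \<le> ennreal y}"
      by (rule fnu.finite_measure_mono[OF sub]) measurable
    then show ?thesis using False that unfolding Fdef by simp
  qed
  have Fmono: "mono F" using F_mono by (auto simp: mono_def)
  have Fmeas[measurable]: "F \<in> borel_measurable borel" using borel_measurable_mono[OF Fmono] .
  have Markov: "y * measure \<nu> {\<omega> \<in> space \<nu>. ennreal y < f \<omega>} \<le> Mu" if "y > 0" for y
  proof -
    let ?A = "{\<omega> \<in> space \<nu>. ennreal y < f \<omega>}"
    have Am: "?A \<in> sets \<nu>" by measurable
    have "ennreal y * emeasure \<nu> ?A = (\<integral>\<^sup>+ x. ennreal y * indicator ?A x \<partial>\<nu>)"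
      using Am by (simp add: nn_integral_cmult_indicator)
    also have "\<dots> \<le> (\<integral>\<^sup>+ x. f x \<partial>\<nu>)"
      by (intro nn_integral_mono) (auto simp: indicator_def less_imp_le)
    also have "\<dots> = ennreal Mu" by (rule intf)
    finally have "ennreal (y * measure \<nu> ?A) \<le> ennreal Mu"
      using that by (simp add: fnu.emeasure_eq_measure ennreal_mult)
    then show ?thesis using Mu_pos by simp
  qed
  have F_lower: "N - Mu / y \<le> F y" if "y > 0" for y
  proof -
    have "measure \<nu> {\<omega> \<in> space \<nu>. ennreal y < f \<omega>} \<le> Mu / y"
      using Markov[OF that] that by (simp add: field_simps mult.commute)
    then show ?thesis using Fcompl[of y] that by simp
  qed
  have Ftend: "(F \<longlongrightarrow> N) at_top"
  proof (rule tendsto_sandwich[of "\<lambda>y. N - Mu / y" F at_top "\<lambda>_. N"])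
    show "\<forall>\<^sub>F n in at_top. N - Mu / n \<le> F n"
      using eventually_gt_at_top[of 0] by eventually_elim (rule F_lower)
    show "\<forall>\<^sub>F n in at_top. F n \<le> N" by (simp add: F_le)
    have "((\<lambda>y::real. Mu / y) \<longlongrightarrow> 0) at_top"
      by (rule real_tendsto_divide_at_top) (auto simp: filterlim_ident)
    then show "((\<lambda>y. N - Mu / y) \<longlongrightarrow> N) at_top"
      using tendsto_diff[OF tendsto_const[of N]] by fastforce
  qed simp
  have LN: "L = N" unfolding L_def Fmu_inf_def F_def[symmetric]
    using Ftend by (simp add: tendsto_Lim)
  define T where "T y = 1 - F y / N" for y
  define w where "w y = ennreal (1 / Mu) * (ennreal (N - F y) * indicator {0..} y)" for y
  define S where "S x = {y. 0 \<le> y \<and> (1 - x) * N \<le> F y}" for x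
  have Tmeas[measurable]: "T \<in> borel_measurable borel" unfolding T_def by measurable
  have wmeas[measurable]: "w \<in> borel_measurable borel" unfolding w_def by measurable
  have T_le1: "T y \<le> 1" for y unfolding T_def using F_nonneg[of y] N_pos by simp
  have T_iff: "T y \<le> x \<longleftrightarrow> (1 - x) * N \<le> F y" for x y
    unfolding T_def using N_pos by (simp add: field_simps)
  have K1: "(\<integral>\<^sup>+ y. w y * indicator (T -` {..x}) y \<partial>lborel) = emeasure m {0<..x}"
    if "0 < x" "x \<le> 1" for x
  proof -
    have "(\<integral>\<^sup>+ y. w y * indicator (T -` {..x}) y \<partial>lborel) =
      (\<integral>\<^sup>+ y. ennreal (1 / Mu) * (ennreal (L - F y) * indicator (S x) y) \<partial>lborel)"
      by (rule nn_integral_cong) (auto simp: w_def S_def LN T_iff indicator_def)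
    also have "\<dots> = ennreal (1 / Mu) * (\<integral>\<^sup>+ y. ennreal (L - F y) * indicator (S x) y \<partial>lborel)"
      by (rule nn_integral_cmult) (unfold S_def, measurable)
    also have "\<dots> = emeasure m {0<..x}"
      using assms(8)[of x] that unfolding S_def Mu_def L_def F_def N_def by simp
    finally show ?thesis .
  qed
  have K0: "(\<integral>\<^sup>+ y. w y * indicator (T -` {..x}) y \<partial>lborel) = 0" if "x \<le> 0" for x
  proof -
    have z: "w y * indicator (T -` {..x}) y = 0" for y
    proof (cases "T y \<le> x")
      case True
      then have "(1 - x) * N \<le> F y" using T_iff by blast
      moreover have "N \<le> (1 - x) * N" using that N_pos by (simp add: algebra_simps mult_nonneg_nonpos)
      ultimately have "N - F y \<le> 0" by simp
      then show ?thesis by (simp add: w_def ennreal_neg)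
    qed simp
    have "(\<integral>\<^sup>+ y. w y * indicator (T -` {..x}) y \<partial>lborel) = (\<integral>\<^sup>+ (y::real). 0 \<partial>lborel)"
      by (rule nn_integral_cong) (simp only: z)
    then show ?thesis by simp
  qed
  have K2: "T -` {..x} = UNIV" if "x \<ge> 1" for x using T_le1 that by (auto intro: order_trans)
  define rho where "rho = density lborel w"
  define m1 where "m1 = distr m borel id"
  define m2 where "m2 = distr rho borel T"
  have id_meas: "id \<in> measurable m borel"
    by (subst measurable_cong_sets[OF assms(6) refl]) (rule measurable_restrict_space1, simp)
  have T_meas': "T \<in> measurable rho borel"
    unfolding rho_def by (subst measurable_cong_sets[of _ lborel]) auto
  have sp_rho: "space rho = UNIV" unfolding rho_def by simp
  have em1: "emeasure m1 {..x} = emeasure m ({..x} \<inter> {0<..1})" for x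
    unfolding m1_def using id_meas spm by (simp add: emeasure_distr)
  have em2: "emeasure m2 A = (\<integral>\<^sup>+ y. w y * indicator (T -` A) y \<partial>lborel)" if "A \<in> sets borel" for A
  proof -
    have "emeasure m2 A = emeasure rho (T -` A)"
      unfolding m2_def using T_meas' that sp_rho by (simp add: emeasure_distr)
    also have "\<dots> = (\<integral>\<^sup>+ y. w y * indicator (T -` A) y \<partial>lborel)"
      unfolding rho_def using that by (subst emeasure_density) (auto intro: measurable_sets_borel[OF Tmeas])
    finally show ?thesis .
  qed
  have cdfeq: "emeasure m1 {..x} = emeasure m2 {..x}" for x
  proof -
    consider "x \<le> 0" | "0 < x \<and> x \<le> 1" | "x > 1" by linarith
    then show ?thesis
    proof cases
      case 1
      then have "{..x} \<inter> {0<..1} = {}" by auto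
      then show ?thesis using 1 by (simp add: em1 em2 K0)
    next
      case 2
      then have "{..x} \<inter> {0<..1} = {0<..x}" by auto
      then show ?thesis using 2 by (simp add: em1 em2 K1)
    next
      case 3
      then have "{..x} \<inter> {0<..1} = {0<..1}" by auto
      moreover have "T -` {..x} = T -` {..1}" using K2[of x] K2[of 1] 3 by simp
      ultimately show ?thesis using 3 by (simp add: em1 em2 K1)
    qed
  qed
  have fin1: "finite_measure m1" unfolding m1_def
    by (rule finite_measure.finite_measure_distr[OF _ id_meas]) (rule pm.finite_measure_axioms)
  have fin2: "finite_measure m2"
  proof (rule finite_measureI)
    have "space m2 = UNIV" unfolding m2_def by simp
    then have "emeasure m2 (space m2) = emeasure m2 {..1}"
      using em2[of UNIV] em2[of "{..1}"] K2[of 1] by simp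
    also have "\<dots> = emeasure m1 {..1}" by (simp add: cdfeq)
    also have "\<dots> \<noteq> \<infinity>" using fin1 by (simp add: finite_measure.emeasure_finite)
    finally show "emeasure m2 (space m2) \<noteq> \<infinity>" .
  qed
  have m12: "m1 = m2"
  proof (rule cdf_unique')
    show "finite_borel_measure m1" using fin1
      by (simp add: finite_borel_measure_def finite_borel_measure_axioms_def m1_def)
    show "finite_borel_measure m2" using fin2
      by (simp add: finite_borel_measure_def finite_borel_measure_axioms_def m2_def)
    show "cdf m1 = cdf m2" unfolding cdf_def measure_def by (simp add: cdfeq)
  qed
  define h where "h a = ennreal (1 / a) * indicator {1 - \<gamma>..1} a" for a :: real
  have hmeas[measurable]: "h \<in> borel_measurable borel" unfolding h_def by measurable
  define Sg where "Sg = {y. 0 \<le> y \<and> F y \<le> N * \<gamma>}"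
  have Sgm[measurable]: "Sg \<in> sets borel" unfolding Sg_def by measurable
  have pw: "w y * h (T y) = ennreal (N / Mu) * indicator Sg y" for y
  proof (cases "0 \<le> y \<and> F y \<le> N * \<gamma>")
    case True
    have "N * \<gamma> < N" using N_pos assms(10) by (simp add: mult_less_cancel_left1)
    then have FN: "F y < N" using True by linarith
    have "F y / N \<le> \<gamma>" using True N_pos by (simp add: pos_divide_le_eq mult.commute)
    then have T1: "1 - \<gamma> \<le> T y" unfolding T_def by linarith
    have "F y / N < 1" using FN N_pos by (simp add: pos_divide_less_eq)
    then have Tpos: "0 < T y" unfolding T_def by linarith
    have "w y * h (T y) = ennreal (1 / Mu) * ennreal (N - F y) * ennreal (1 / T y)"
      using True T1 T_le1[of y] by (simp add: w_def h_def)
    also have "\<dots> = ennreal (1 / Mu * (N - F y)) * ennreal (1 / T y)"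
      using Mu_pos FN by (subst ennreal_mult) auto
    also have "\<dots> = ennreal (1 / Mu * (N - F y) * (1 / T y))"
      using Mu_pos FN Tpos by (subst ennreal_mult) auto
    also have "1 / Mu * (N - F y) * (1 / T y) = N / Mu"
      using FN N_pos Mu_pos unfolding T_def by (simp add: field_simps)
    finally show ?thesis using True by (simp add: Sg_def)
  next
    case False
    show ?thesis
    proof (cases "0 \<le> y")
      case True
      with False have "N * \<gamma> < F y" by simp
      then have "\<gamma> < F y / N" using N_pos by (simp add: pos_less_divide_eq mult.commute)
      then have "T y < 1 - \<gamma>" unfolding T_def by linarith
      then show ?thesis using False by (simp add: h_def Sg_def)
    next
      case False
      then show ?thesis by (simp add: w_def Sg_def)
    qed
  qed
  define Z where "Z = {z. 0 \<le> z \<and> N * \<gamma> < F z}"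
  define s where "s = Inf Z"
  have s_eq: "Fmu_inv \<nu> \<mu> (measure \<nu> (space \<nu>) * \<gamma>) = s"
    unfolding s_def Z_def Fmu_inv_def F_def N_def ..
  have Zne: "Z \<noteq> {}"
  proof -
    define z where "z = Mu / (N * (1 - \<gamma>)) + 1"
    have Np: "0 < N * (1 - \<gamma>)" using N_pos assms(10) by simp
    then have "0 \<le> Mu / (N * (1 - \<gamma>))" using Mu_pos by simp
    then have zpos: "z > 0" unfolding z_def by linarith
    have "Mu < z * (N * (1 - \<gamma>))"
    proof -
      have "Mu = Mu / (N * (1 - \<gamma>)) * (N * (1 - \<gamma>))" using N_pos assms(10) by simp
      also have "\<dots> < z * (N * (1 - \<gamma>))" unfolding z_def
        using N_pos assms(10) by (intro mult_strict_right_mono) auto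
      finally show ?thesis .
    qed
    then have "Mu / z < N * (1 - \<gamma>)" using zpos by (simp add: field_simps)
    then have "N * \<gamma> < F z" using F_lower[OF zpos] by (simp add: algebra_simps)
    then have "z \<in> Z" unfolding Z_def using zpos by simp
    then show ?thesis by blast
  qed
  have Zbdd: "bdd_below Z" unfolding Z_def by (auto intro: bdd_belowI[of _ 0])
  have s_nonneg: "0 \<le> s" unfolding s_def using Zne by (auto intro!: cInf_greatest simp: Z_def)
  have sub1: "{0..<s} \<subseteq> Sg"
  proof
    fix y assume y: "y \<in> {0..<s}"
    have "y \<notin> Z" using y cInf_lower[OF _ Zbdd, of y] unfolding s_def by force
    then show "y \<in> Sg" using y unfolding Z_def Sg_def by auto
  qed
  have sub2: "Sg \<subseteq> {0..s}"
  proof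
    fix y assume y: "y \<in> Sg"
    have "y \<le> s"
    proof (rule ccontr)
      assume "\<not> y \<le> s"
      then have "Inf Z < y" unfolding s_def by simp
      then obtain z where "z \<in> Z" "z < y" using cInf_less_iff[OF Zne Zbdd] by blast
      then have "N * \<gamma> < F y" using F_mono[of z y] unfolding Z_def by auto
      then show False using y unfolding Sg_def by auto
    qed
    then show "y \<in> {0..s}" using y unfolding Sg_def by auto
  qed
  have eSg: "emeasure lborel Sg = ennreal s"
  proof (rule antisym)
    have "emeasure lborel Sg \<le> emeasure lborel {0..s}" by (rule emeasure_mono[OF sub2]) simp
    then show "emeasure lborel Sg \<le> ennreal s" using s_nonneg by simp
    have "emeasure lborel {0..<s} \<le> emeasure lborel Sg" by (rule emeasure_mono[OF sub1]) simp
    then show "ennreal s \<le> emeasure lborel Sg" using s_nonneg by simp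
  qed
  have "(\<integral>\<^sup>+ \<alpha> \<in> {1 - \<gamma>..1}. ennreal (1 / \<alpha>) \<partial>m) = (\<integral>\<^sup>+ \<alpha>. h (id \<alpha>) \<partial>m)"
    unfolding h_def by simp
  also have "\<dots> = (\<integral>\<^sup>+ \<alpha>. h \<alpha> \<partial>m1)"
    unfolding m1_def by (rule nn_integral_distr[symmetric, OF id_meas]) simp
  also have "\<dots> = (\<integral>\<^sup>+ \<alpha>. h \<alpha> \<partial>m2)" by (simp add: m12)
  also have "\<dots> = (\<integral>\<^sup>+ y. h (T y) \<partial>rho)"
    unfolding m2_def by (rule nn_integral_distr[OF T_meas']) simp
  also have "\<dots> = (\<integral>\<^sup>+ y. w y * h (T y) \<partial>lborel)"
    unfolding rho_def by (rule nn_integral_density) auto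
  also have "\<dots> = (\<integral>\<^sup>+ y. ennreal (N / Mu) * indicator Sg y \<partial>lborel)"
    by (simp only: pw)
  also have "\<dots> = ennreal (N / Mu) * ennreal s"
    using Sgm by (simp add: nn_integral_cmult_indicator eSg)
  also have "\<dots> = ennreal (N / Mu * s)"
    using N_pos Mu_pos s_nonneg by (subst ennreal_mult) auto
  finally show ?thesis unfolding s_eq N_def Mu_def .
qed

end
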